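(* Let $\xi$ be a model, $k\ge1$ an integer, and let $\phi$ be the minimizer of $P_{0,\xi}$ on $\mathcal{C}$. Suppose $\phi\in RSB_k$. Then $\phi'(0)<0$; equivalently, $dm$ has an atom at $0$.
   Context: A model is $\xi(t)=\sum_{p\ge2}\beta_p^2t^p$, real $\beta_p$ not all zero, with $\xi(1+\epsilon)<\infty$ for some $\epsilon>0$. $\mathcal{C}$ is the set of $\phi\in C([0,1])$ with $\phi\ge0$, non-increasing and concave; $P_{0,\xi}(\phi)=\int_0^1(\xi''\phi+1/\phi)dx$. Every $\phi\in\mathcal{C}$ can be written uniquely as $\phi(t)=\int_t^1 m(s)ds+c$ with $c=\phi(1)\ge0$ and $m=-\phi'\ge0$ non-decreasing and càdlàg; $dm$ denotes the Lebesgue–Stieltjes measure of $m$ on $[0,1)$ (with $m=0$ to the left of $0$, so $dm(\{0\})=m(0)$). $RSB_k$ is the set of $\phi\in\mathcal{C}$ for which $dm$ restricted to $[0,1)$ is purely atomic with exactly $k$ atoms. $\phi'(0)=\lim_{t\to0^+}(\phi(t)-\phi(0))/t$. *)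

theory Defs
  imports "HOL-Analysis.Analysis"
begin

definition is_model :: "(nat \<Rightarrow> real) \<Rightarrow> bool" where
  "is_model \<beta> \<longleftrightarrow> \<beta> 0 = 0 \<and> \<beta> 1 = 0 \<and> (\<exists>p. \<beta> p \<noteq> 0) \<and>
     (\<exists>\<epsilon>>0. summable (\<lambda>p. (\<beta> p)\<^sup>2 * (1 + \<epsilon>) ^ p))"

definition xi :: "(nat \<Rightarrow> real) \<Rightarrow> real \<Rightarrow> real" where
  "xi \<beta> t = (\<Sum>p. (\<beta> p)\<^sup>2 * t ^ p)"

definition classC :: "(real \<Rightarrow> real) set" where
  "classC = {\<phi>. continuous_on {0..1} \<phi> \<and> (\<forall>x\<in>{0..1}. 0 \<le> \<phi> x) \<and>
      antimono_on {0..1} \<phi> \<and> concave_on {0..1} \<phi>}"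

definition P0 :: "(nat \<Rightarrow> real) \<Rightarrow> (real \<Rightarrow> real) \<Rightarrow> ennreal" where
  "P0 \<beta> \<phi> = (\<integral>\<^sup>+ x \<in> {0..1}. (ennreal (deriv (deriv (xi \<beta>)) x * \<phi> x)
        + (if \<phi> x > 0 then ennreal (1 / \<phi> x) else \<infinity>)) \<partial>lborel)"

text \<open>phi(t) = int_t^1 m + phi(1) with m(s) = sum of the atoms a_q, q in Q, q <= s:
  i.e. dm on [0,1) is purely atomic with atoms Q (weights a > 0).\<close>
definition atomic_repr :: "(real \<Rightarrow> real) \<Rightarrow> real set \<Rightarrow> (real \<Rightarrow> real) \<Rightarrow> bool" where
  "atomic_repr \<phi> Q a \<longleftrightarrow> finite Q \<and> Q \<subseteq> {0..<1} \<and> (\<forall>q\<in>Q. 0 < a q) \<and>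
     (\<forall>t\<in>{0..1}. \<phi> t = \<phi> 1 + integral {t..1} (\<lambda>s. \<Sum>q\<in>{q\<in>Q. q \<le> s}. a q))"

definition RSB :: "nat \<Rightarrow> (real \<Rightarrow> real) set" where
  "RSB k = {\<phi>\<in>classC. \<exists>Q a. atomic_repr \<phi> Q a \<and> card Q = k}"

end

theory Submission
  imports Defs
begin

lemma C_cong: "f \<in> classC \<Longrightarrow> (\<And>t. t \<in> {0..1} \<Longrightarrow> g t = f t) \<Longrightarrow> g \<in> classC"
proof -
  assume f: "f \<in> classC" and e: "\<And>t. t \<in> {0..1} \<Longrightarrow> g t = f t"
  have "continuous_on {0..1} g" using f e continuous_on_cong[of "{0..1}" "{0..1}" g f] by (auto simp: classC_def)
  moreover have "concave_on {0..1} g"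
  proof -
    have cf: "concave_on {0..1} f" using f by (auto simp: classC_def)
    have cv: "convex {0..1::real}" by simp
    { fix x y u v :: real assume xy: "x \<in> {0..1}" "y \<in> {0..1}" and uv: "u \<ge> 0" "v \<ge> 0" "u + v = 1"
      have m: "u *\<^sub>R x + v *\<^sub>R y \<in> {0..1}" using convexD[OF cv xy uv] .
      have "f (u *\<^sub>R x + v *\<^sub>R y) \<ge> u * f x + v * f y" using cf xy uv by (auto simp: concave_on_iff)
      then have "g (u *\<^sub>R x + v *\<^sub>R y) \<ge> u * g x + v * g y" using e[OF m] e[OF xy(1)] e[OF xy(2)] by simp }
    then show ?thesis by (auto simp: concave_on_iff)
  qed
  moreover have "antimono_on {0..1} g" using f e by (auto simp: classC_def monotone_on_def)
  moreover have "\<forall>x\<in>{0..1}. 0 \<le> g x" using f e by (auto simp: classC_def)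
  ultimately show ?thesis by (simp add: classC_def)
qed

lemma C_add: "f \<in> classC \<Longrightarrow> g \<in> classC \<Longrightarrow> (\<lambda>t. f t + g t) \<in> classC"
  unfolding classC_def
  by (auto simp: monotone_on_def intro!: continuous_on_add concave_on_add add_mono)

lemma C_scale: "f \<in> classC \<Longrightarrow> c \<ge> 0 \<Longrightarrow> (\<lambda>t. c * f t) \<in> classC"
  unfolding classC_def
  by (auto simp: monotone_on_def intro!: continuous_on_mult concave_on_cmul mult_left_mono)

lemma C_const: "c \<ge> 0 \<Longrightarrow> (\<lambda>t. c) \<in> classC"
  unfolding classC_def
  by (auto simp: monotone_on_def concave_on_const)

lemma C_atom: "u \<le> 1 \<Longrightarrow> (\<lambda>t. 1 - max t u) \<in> classC"
  unfolding classC_def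
proof (intro CollectI conjI)
  assume u: "u \<le> 1"
  show "continuous_on {0..1} (\<lambda>t. 1 - max t u)" by (intro continuous_intros)
  show "\<forall>x\<in>{0..1}. 0 \<le> 1 - max x u" using u by auto
  show "antimono_on {0..1} (\<lambda>t. 1 - max t u)" by (auto simp: monotone_on_def)
  show "concave_on {0..1} (\<lambda>t. 1 - max t u)"
  proof (rule concave_on_linorderI)
    fix t x y :: real assume "0 < t" "t < 1"
    have a: "(1 - t) * x + t * y \<le> (1 - t) * max x u + t * max y u"
      using \<open>0 < t\<close> \<open>t < 1\<close> by (intro add_mono mult_left_mono) auto
    have b: "(1 - t) * u + t * u \<le> (1 - t) * max x u + t * max y u"
      using \<open>0 < t\<close> \<open>t < 1\<close> by (intro add_mono mult_left_mono) auto
    have "max ((1 - t) * x + t * y) u \<le> (1 - t) * max x u + t * max y u"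
    proof (rule max.boundedI[OF a])
      have "(1 - t) * u + t * u = u" by (simp add: algebra_simps)
      then show "u \<le> (1 - t) * max x u + t * max y u" using b by simp
    qed
    then show "(1 - t) * (1 - max x u) + t * (1 - max y u) \<le> 1 - max ((1 - t) *\<^sub>R x + t *\<^sub>R y) u"
      by (simp add: algebra_simps)
  qed auto
qed

lemma C_sum: "finite S \<Longrightarrow> (\<And>i. i \<in> S \<Longrightarrow> f i \<in> classC) \<Longrightarrow> (\<lambda>t. \<Sum>i\<in>S. f i t) \<in> classC"
proof (induction S rule: finite_induct)
  case empty then show ?case using C_const[of 0] by simp
next
  case (insert x F)
  then show ?case using C_add[of "f x" "\<lambda>t. \<Sum>i\<in>F. f i t"] by simp
qed

lemma repr_formula:
  assumes "atomic_repr \<phi> Q a" and t: "t \<in> {0..1}"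
  shows "\<phi> t = \<phi> 1 + (\<Sum>q\<in>Q. a q * (1 - max t q))"
proof -
  have fin: "finite Q" and Q: "Q \<subseteq> {0..<1}" and eq: "\<phi> t = \<phi> 1 + integral {t..1} (\<lambda>s. \<Sum>q\<in>{q\<in>Q. q \<le> s}. a q)"
    using assms unfolding atomic_repr_def by blast+
  have each: "((\<lambda>s. if s \<in> {q..} then a q else 0) has_integral a q * (1 - max t q)) {t..1}" if "q \<in> Q" for q
  proof -
    have "q \<le> 1" using Q that by auto
    have "{q..} \<inter> {t..1} = {max t q..1}" by auto
    moreover have "((\<lambda>_. a q) has_integral a q * (1 - max t q)) {max t q..1}"
      using has_integral_const_real[of "a q" "max t q" 1] \<open>q \<le> 1\<close> t by (simp add: mult.commute)
    ultimately show ?thesis using has_integral_restrict_Int[of "{q..}" "\<lambda>_. a q" "a q * (1 - max t q)" "{t..1}"] by (simp add: max.commute)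
  qed
  have "((\<lambda>s. \<Sum>q\<in>Q. if s \<in> {q..} then a q else 0) has_integral (\<Sum>q\<in>Q. a q * (1 - max t q))) {t..1}"
    using each by (intro has_integral_sum fin) auto
  moreover have "(\<lambda>s. \<Sum>q\<in>{q\<in>Q. q \<le> s}. a q) = (\<lambda>s. \<Sum>q\<in>Q. if s \<in> {q..} then a q else 0)"
    using sum.inter_filter[OF fin, of a] by (intro ext) simp
  ultimately show ?thesis using eq by (simp add: integral_unique)
qed

definition S :: "(nat \<Rightarrow> real) \<Rightarrow> real \<Rightarrow> real" where "S c x = (\<Sum>n. c n * x ^ n)"

definition conv :: "(nat \<Rightarrow> real) \<Rightarrow> real \<Rightarrow> bool" where
  "conv c R \<longleftrightarrow> (\<forall>z. \<bar>z\<bar> < R \<longrightarrow> summable (\<lambda>n. c n * z ^ n))"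

lemma conv_diffs: "conv c R \<Longrightarrow> conv (diffs c) R"
  unfolding conv_def by (auto intro: termdiff_converges)

lemma S_deriv: "conv c R \<Longrightarrow> \<bar>x\<bar> < R \<Longrightarrow> (S c has_real_derivative S (diffs c) x) (at x)"
  unfolding conv_def S_def[abs_def]
  using termdiffs_strong'[of R c x] by auto

lemma deriv_S: "conv c R \<Longrightarrow> \<bar>x\<bar> < R \<Longrightarrow> deriv (S c) x = S (diffs c) x"
  by (rule DERIV_imp_deriv) (rule S_deriv)

lemma deriv2_S: assumes "conv c R" "\<bar>x\<bar> < R"
  shows "deriv (deriv (S c)) x = S (diffs (diffs c)) x"
proof (rule DERIV_imp_deriv)
  have d: "(S (diffs c) has_real_derivative S (diffs (diffs c)) x) (at x)"
    using S_deriv[OF conv_diffs[OF assms(1)] assms(2)] .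
  show "(deriv (S c) has_real_derivative S (diffs (diffs c)) x) (at x)"
  proof (rule has_field_derivative_transform_within_open[OF d, of "ball 0 R"])
    show "open (ball (0::real) R)" by simp
    show "x \<in> ball 0 R" using assms(2) by simp
    fix y :: real assume "y \<in> ball 0 R"
    then show "S (diffs c) y = deriv (S c) y" using deriv_S[OF assms(1)] by simp
  qed
qed

lemma S_nonneg: "conv c R \<Longrightarrow> (\<And>n. c n \<ge> 0) \<Longrightarrow> 0 \<le> x \<Longrightarrow> x < R \<Longrightarrow> S c x \<ge> 0"
  unfolding S_def conv_def by (intro suminf_nonneg) auto

lemma diffs_nonneg: "(\<And>n. c n \<ge> 0) \<Longrightarrow> diffs c n \<ge> (0::real)"
  by (simp add: diffs_def)

lemma S_zero: "S c 0 = c 0"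
  unfolding S_def by simp

lemma S_cont: "conv c R \<Longrightarrow> 0 < R \<Longrightarrow> 1 < R \<Longrightarrow> continuous_on {0..1} (S c)"
proof (intro continuous_at_imp_continuous_on ballI)
  fix x :: real assume "conv c R" "1 < R" "x \<in> {0..1}"
  then show "isCont (S c) x" using S_deriv[of c R x] by (intro DERIV_isCont) auto
qed

lemma S_key:
  assumes cv: "conv c R" and nn: "\<And>n. c n \<ge> 0" and c0: "c 0 = 0" and c1: "c 1 = 0"
    and p: "p \<ge> 3" "c p > 0" and q: "0 < q" "q < R"
  shows "S c q - q * S (diffs c) q / 2 < 0"
proof -
  have qa: "\<bar>q\<bar> < R" using q by simp
  have s0: "(\<lambda>n. c n * q ^ n) sums S c q"
    using cv qa unfolding conv_def S_def by (simp add: summable_sums)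
  have "summable (\<lambda>n. diffs c n * q ^ n)" using conv_diffs[OF cv] qa unfolding conv_def by simp
  from diffs_equiv[OF this] have s1: "(\<lambda>n. of_nat n * c n * q ^ (n - Suc 0)) sums S (diffs c) q"
    unfolding S_def .
  have s1': "(\<lambda>n. q * (of_nat n * c n * q ^ (n - Suc 0))) sums (q * S (diffs c) q)"
    by (rule sums_mult[OF s1])
  have e: "q * (of_nat n * c n * q ^ (n - Suc 0)) = of_nat n * c n * q ^ n" for n
  proof (cases n)
    case 0 then show ?thesis by simp
  next
    case (Suc m) then show ?thesis by (simp add: algebra_simps)
  qed
  have s2: "(\<lambda>n. of_nat n * c n * q ^ n / 2) sums (q * S (diffs c) q / 2)"
    using sums_divide[OF s1'[unfolded e], of 2] .
  have s3: "(\<lambda>n. c n * q ^ n - of_nat n * c n * q ^ n / 2) sums (S c q - q * S (diffs c) q / 2)"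
    by (rule sums_diff[OF s0 s2])
  have t: "0 \<le> - (c n * q ^ n - of_nat n * c n * q ^ n / 2)" for n
  proof (cases "n \<ge> 2")
    case True
    have "c n * q ^ n \<ge> 0" using nn q by simp
    moreover have "real n \<ge> 2" using True by simp
    ultimately have "2 * (c n * q ^ n) \<le> real n * (c n * q ^ n)"
      by (intro mult_right_mono) auto
    then show ?thesis by (simp add: algebra_simps)
  next
    case False then have "n = 0 \<or> n = 1" by auto
    then show ?thesis using c0 c1 by auto
  qed
  have tp: "0 < - (c p * q ^ p - of_nat p * c p * q ^ p / 2)"
  proof -
    have "c p * q ^ p > 0" using p q by simp
    moreover have "real p \<ge> 3" using p by simp
    ultimately have "2 * (c p * q ^ p) < real p * (c p * q ^ p)"
      by (intro mult_strict_right_mono) auto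
    then show ?thesis by (simp add: algebra_simps)
  qed
  have "0 < (\<Sum>n. - (c n * q ^ n - of_nat n * c n * q ^ n / 2))"
    using suminf_pos2[where f="\<lambda>n. - (c n * q ^ n - of_nat n * c n * q ^ n / 2)", OF sums_summable[OF sums_minus[OF s3]] t tp] .
  moreover have "(\<Sum>n. - (c n * q ^ n - of_nat n * c n * q ^ n / 2)) = - (S c q - q * S (diffs c) q / 2)"
    using sums_unique[OF sums_minus[OF s3]] by simp
  ultimately show ?thesis by simp
qed

definition Fi :: "(real \<Rightarrow> real) \<Rightarrow> (real \<Rightarrow> real) \<Rightarrow> real \<Rightarrow> ennreal" where
  "Fi D f x = ennreal (D x * f x) + (if f x > 0 then ennreal (1 / f x) else \<infinity>)"

lemma P0_Fi: "P0 \<beta> f = (\<integral>\<^sup>+x. Fi (deriv (deriv (xi \<beta>))) f x * indicator {0..1} x \<partial>lborel)"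
  unfolding P0_def Fi_def by simp

lemma L_piece:
  assumes u: "0 \<le> u" and DX: "\<And>x. x \<in> {0..u} \<Longrightarrow> D x = X x" and X: "continuous_on {0..u} X"
    and Xn: "\<And>x. x \<in> {0..u} \<Longrightarrow> X x \<ge> 0"
    and f: "continuous_on {0..u} f" and fp: "\<And>x. x \<in> {0..u} \<Longrightarrow> f x > 0"
  shows "(\<integral>\<^sup>+x. Fi D f x * indicator {0..u} x \<partial>lborel) = ennreal (integral {0..u} (\<lambda>x. X x * f x + 1 / f x))"
proof -
  have eq: "Fi D f x * indicator {0..u} x = ennreal (X x * f x + 1 / f x) * indicator {0..u} x" for x
  proof (cases "x \<in> {0..u}")
    case True
    have "0 \<le> X x * f x" using Xn[OF True] fp[OF True] by simp
    moreover have "0 \<le> 1 / f x" using fp[OF True] by simp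
    ultimately show ?thesis using True fp[OF True] DX[OF True] by (simp add: Fi_def ennreal_plus)
  qed simp
  have c: "continuous_on {0..u} (\<lambda>x. X x * f x + 1 / f x)"
  proof -
    have "\<And>x. x \<in> {0..u} \<Longrightarrow> f x \<noteq> 0" using fp by (metis less_irrefl)
    then show ?thesis using X f by (intro continuous_intros) auto
  qed
  have hi: "((\<lambda>x. X x * f x + 1 / f x) has_integral integral {0..u} (\<lambda>x. X x * f x + 1 / f x)) {0..u}"
    using integrable_continuous_interval[OF c] by (rule integrable_integral)
  have nn: "\<And>x. x \<in> {0..u} \<Longrightarrow> 0 \<le> X x * f x + 1 / f x"
    using Xn fp by (simp add: less_imp_le)
  show ?thesis unfolding eq using nn_integral_has_integral_lebesgue'[OF nn hi] .
qed

definition cl :: "real \<Rightarrow> real" where "cl x = max 0 (min 1 x)"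

lemma cl_cont: "continuous_on {0..1} f \<Longrightarrow> continuous_on UNIV (\<lambda>x. f (cl x))"
proof -
  assume f: "continuous_on {0..1} f"
  have "continuous_on UNIV cl" unfolding cl_def by (intro continuous_intros)
  moreover have "cl ` UNIV \<subseteq> {0..1}" by (auto simp: cl_def)
  ultimately show ?thesis using continuous_on_compose2[OF f] by blast
qed

lemma cl_id: "x \<in> {0..1} \<Longrightarrow> cl x = x" by (auto simp: cl_def)

lemma L_split:
  assumes f: "continuous_on {0..1} f" and u: "0 \<le> u" "u \<le> 1"
    and DX: "\<And>x. x \<in> {0..1} \<Longrightarrow> D x = X x" and X: "continuous_on {0..1} X"
  shows "(\<integral>\<^sup>+x. Fi D f x * indicator {0..1} x \<partial>lborel) =
     (\<integral>\<^sup>+x. Fi D f x * indicator {0..u} x \<partial>lborel) + (\<integral>\<^sup>+x. Fi D f x * indicator {u<..1} x \<partial>lborel)"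
proof -
  define G where "G x = ennreal (X (cl x) * f (cl x)) + (if f (cl x) > 0 then ennreal (1 / f (cl x)) else \<infinity>)" for x
  have [measurable]: "(\<lambda>x. f (cl x)) \<in> borel_measurable borel"
    by (rule borel_measurable_continuous_onI[OF cl_cont[OF f]])
  have [measurable]: "(\<lambda>x. X (cl x)) \<in> borel_measurable borel"
    by (rule borel_measurable_continuous_onI[OF cl_cont[OF X]])
  have Gm[measurable]: "G \<in> borel_measurable borel"
    unfolding G_def by measurable
  have GF: "Fi D f x * indicator A x = G x * indicator A x" if "A \<subseteq> {0..1}" for x A
  proof (cases "x \<in> A")
    case True then have "x \<in> {0..1}" using that by auto
    then show ?thesis using True DX by (simp add: G_def Fi_def cl_id)
  qed simp
  have ind: "G x * indicator {0..1} x = G x * indicator {0..u} x + G x * indicator {u<..1} x" for x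
    using u by (auto simp: indicator_def)
  have "(\<integral>\<^sup>+x. Fi D f x * indicator {0..1} x \<partial>lborel) = (\<integral>\<^sup>+x. G x * indicator {0..1} x \<partial>lborel)"
    using GF[of "{0..1}"] by simp
  also have "\<dots> = (\<integral>\<^sup>+x. G x * indicator {0..u} x \<partial>lborel) + (\<integral>\<^sup>+x. G x * indicator {u<..1} x \<partial>lborel)"
    unfolding ind by (rule nn_integral_add) measurable
  also have "\<dots> = (\<integral>\<^sup>+x. Fi D f x * indicator {0..u} x \<partial>lborel) + (\<integral>\<^sup>+x. Fi D f x * indicator {u<..1} x \<partial>lborel)"
  proof -
    have "{0..u} \<subseteq> {0..1}" "{u<..1} \<subseteq> {0..1}" using u by auto
    from GF[OF this(1)] GF[OF this(2)] show ?thesis by simp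
  qed
  finally show ?thesis .
qed

lemma ftc_part:
  assumes d0: "\<And>x. x \<in> {0..q} \<Longrightarrow> (Pa has_real_derivative Pb x) (at x)"
    and d1: "\<And>x. x \<in> {0..q} \<Longrightarrow> (Pb has_real_derivative Pc x) (at x)"
    and z0: "Pa 0 = 0" and z1: "Pb 0 = 0" and q: "0 \<le> q"
  shows "((\<lambda>t. s * (Pc t * (q/2 - t) - (q/2 - t) * B) + K) has_integral (s * (Pa q - q * Pb q / 2) + K * q)) {0..q}"
proof -
  define AD where "AD t = s * (Pb t * (q/2 - t) + Pa t - (q*t/2 - t^2/2) * B) + K * t" for t
  have "(AD has_real_derivative (s * (Pc t * (q/2 - t) - (q/2 - t) * B) + K)) (at t)" if "t \<in> {0..q}" for t
    unfolding AD_def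
    by (auto intro!: derivative_eq_intros d0[OF that] d1[OF that] simp: algebra_simps)
  then have "((\<lambda>t. s * (Pc t * (q/2 - t) - (q/2 - t) * B) + K) has_integral (AD q - AD 0)) {0..q}"
    by (intro fundamental_theorem_of_calculus q)
       (simp add: has_real_derivative_iff_has_vector_derivative[symmetric] has_field_derivative_at_within)
  moreover have "AD q - AD 0 = s * (Pa q - q * Pb q / 2) + K * q"
    unfolding AD_def using z0 z1 by (simp add: algebra_simps power2_eq_square)
  ultimately show ?thesis by simp
qed

lemma recip_bound:
  fixes A x s cs :: real
  assumes cs: "0 < cs" "cs \<le> A" and Ax: "cs / 2 \<le> A + x" and xs: "\<bar>x\<bar> \<le> s / 2"
  shows "1 / (A + x) - 1 / A \<le> - x * (1 / A\<^sup>2) + s\<^sup>2 / (2 * cs ^ 3)"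
proof -
  have A: "A > 0" using cs by simp
  have Axp: "A + x > 0" using cs Ax by simp
  have id0: "1 / B - 1 / A = - (B - A) * (1 / A\<^sup>2) + (B - A)\<^sup>2 / (A\<^sup>2 * B)" if "B > 0" for B
    using A that by (simp add: field_simps power2_eq_square)
  have id: "1 / (A + x) - 1 / A = - x * (1 / A\<^sup>2) + x\<^sup>2 / (A\<^sup>2 * (A + x))"
    using id0[OF Axp] by simp
  have x2: "x\<^sup>2 \<le> (s / 2)\<^sup>2"
    using xs by (metis abs_ge_zero order_trans power2_abs power_mono)
  have "cs\<^sup>2 \<le> A\<^sup>2" using cs by (intro power_mono) auto
  then have den: "cs\<^sup>2 * (cs / 2) \<le> A\<^sup>2 * (A + x)"
    using Ax cs by (intro mult_mono) auto
  have "x\<^sup>2 / (A\<^sup>2 * (A + x)) \<le> (s / 2)\<^sup>2 / (cs\<^sup>2 * (cs / 2))"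
    by (rule frac_le[OF _ x2 _ den]) (use cs in auto)
  also have "\<dots> = s\<^sup>2 / (2 * cs ^ 3)"
    using cs by (simp add: field_simps power2_eq_square power3_eq_cube)
  finally show ?thesis using id by simp
qed

lemma recip_bound2:
  fixes X p y s cs :: real
  assumes cs: "0 < cs" "cs \<le> p" and y: "cs / 2 \<le> y" "y \<le> p" "p - y \<le> s / 2" and X: "0 \<le> X"
  shows "X * y + 1 / y \<le> X * p + 1 / p + s / cs\<^sup>2"
proof -
  have "X * y \<le> X * p" using X y by (simp add: mult_left_mono)
  moreover have "1 / y - 1 / p = (p - y) / (p * y)" using cs y by (simp add: field_simps)
  moreover have "(p - y) / (p * y) \<le> (s / 2) / (cs * (cs / 2))"
    using cs y by (intro frac_le mult_mono) auto
  moreover have "(s / 2) / (cs * (cs / 2)) = s / cs\<^sup>2" using cs by (simp add: field_simps power2_eq_square)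
  ultimately show ?thesis by linarith
qed

lemma gen_contra:
  fixes \<beta> :: "nat \<Rightarrow> real" and \<phi> :: "real \<Rightarrow> real"
  assumes DX: "\<And>x. x \<in> {0..1} \<Longrightarrow> deriv (deriv (xi \<beta>)) x = Yc x"
    and Ycc: "continuous_on {0..1} Yc" and Ycn: "\<And>x. x \<in> {0..1} \<Longrightarrow> Yc x \<ge> 0"
    and d0: "\<And>x. x \<in> {0..1} \<Longrightarrow> (Ya has_real_derivative Yb x) (at x)"
    and d1: "\<And>x. x \<in> {0..1} \<Longrightarrow> (Yb has_real_derivative Yc x) (at x)"
    and z0: "Ya 0 = 0" and z1: "Yb 0 = 0"
    and key: "\<And>q. 0 < q \<Longrightarrow> q < 1 \<Longrightarrow> Ya q - q * Yb q / 2 < 0"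
    and phiC: "\<phi> \<in> classC" and minim: "\<forall>\<psi>\<in>classC. P0 \<beta> \<phi> \<le> P0 \<beta> \<psi>"
    and rep: "atomic_repr \<phi> Q a" and Qne: "Q \<noteq> {}" and Q0: "0 \<notin> Q"
  shows False
proof -
  define D where "D = deriv (deriv (xi \<beta>))"
  have fin: "finite Q" and Qsub: "Q \<subseteq> {0..<1}" and apos: "\<forall>q\<in>Q. 0 < a q"
    using rep unfolding atomic_repr_def by blast+
  define q1 where "q1 = Min Q"
  have q1Q: "q1 \<in> Q" unfolding q1_def using fin Qne by (rule Min_in)
  have qmin: "\<And>q. q \<in> Q \<Longrightarrow> q1 \<le> q" unfolding q1_def using fin by simp
  have q1pos: "0 < q1" using q1Q Qsub Q0 by (metis atLeastLessThan_iff less_eq_real_def subsetD)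
  have q1lt: "q1 < 1" using q1Q Qsub by auto
  define a1 where "a1 = a q1"
  have a1pos: "0 < a1" using apos q1Q a1_def by simp
  have rf: "\<And>t. t \<in> {0..1} \<Longrightarrow> \<phi> t = \<phi> 1 + (\<Sum>q\<in>Q. a q * (1 - max t q))"
    using repr_formula[OF rep] by blast
  have c0: "\<phi> 1 \<ge> 0" using phiC by (auto simp: classC_def)
  have termnn: "\<And>t q. t \<le> 1 \<Longrightarrow> q \<in> Q \<Longrightarrow> 0 \<le> a q * (1 - max t q)"
    using apos Qsub by (intro mult_nonneg_nonneg) (auto simp: less_imp_le)
  have lowb: "\<And>t. t \<in> {0..1} \<Longrightarrow> \<phi> t \<ge> a1 * (1 - max t q1)"
  proof -
    fix t :: real assume t: "t \<in> {0..1}"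
    have "a1 * (1 - max t q1) \<le> (\<Sum>q\<in>Q. a q * (1 - max t q))"
      unfolding a1_def using t by (intro member_le_sum q1Q fin termnn) auto
    then show "\<phi> t \<ge> a1 * (1 - max t q1)" using rf[OF t] c0 by simp
  qed
  define cs where "cs = a1 * (1 - q1) / 2"
  have cspos: "0 < cs" unfolding cs_def using a1pos q1lt by simp
  have phi_lb: "\<And>t. 0 \<le> t \<Longrightarrow> t \<le> (1 + q1) / 2 \<Longrightarrow> \<phi> t \<ge> cs"
  proof -
    fix t :: real assume t: "0 \<le> t" "t \<le> (1 + q1) / 2"
    have "(1 - q1) / 2 \<le> 1 - max t q1" using t q1lt by auto
    then have "a1 * ((1 - q1) / 2) \<le> a1 * (1 - max t q1)" using a1pos by (intro mult_left_mono) auto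
    moreover have "t \<in> {0..1}" using t q1lt by auto
    ultimately show "\<phi> t \<ge> cs" using lowb unfolding cs_def by fastforce
  qed
  define A where "A = \<phi> 0"
  have phi_const: "\<And>t. 0 \<le> t \<Longrightarrow> t \<le> q1 \<Longrightarrow> \<phi> t = A"
  proof -
    fix t :: real assume t: "0 \<le> t" "t \<le> q1"
    have "(\<Sum>q\<in>Q. a q * (1 - max t q)) = (\<Sum>q\<in>Q. a q * (1 - max 0 q))"
    proof (rule sum.cong[OF refl])
      fix q assume "q \<in> Q"
      then have "q1 \<le> q" "0 \<le> q" using qmin Qsub by auto
      then show "a q * (1 - max t q) = a q * (1 - max 0 q)" using t by simp
    qed
    then show "\<phi> t = A" unfolding A_def using rf[of t] rf[of 0] t q1lt by simp
  qed
  have Acs: "cs \<le> A" unfolding A_def using phi_lb[of 0] q1lt q1pos by simp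
  define \<delta> where "\<delta> = Ya q1 - q1 * Yb q1 / 2"
  have \<delta>neg: "\<delta> < 0" unfolding \<delta>_def using key q1pos q1lt by simp
  define \<eta> where "\<eta> = min ((1 - q1) / 2) (- \<delta> * cs\<^sup>2 / 4)"
  have \<eta>pos: "0 < \<eta>" unfolding \<eta>_def using q1lt \<delta>neg cspos by (simp add: mult_neg_pos)
  have \<eta>1: "\<eta> \<le> (1 - q1) / 2" unfolding \<eta>_def by (rule min.cobounded1)
  have \<eta>2: "\<eta> \<le> - \<delta> * cs\<^sup>2 / 4" unfolding \<eta>_def by (rule min.cobounded2)
  define u0 where "u0 = q1 + \<eta>"
  have u0a: "u0 \<le> (1 + q1) / 2" and u0b: "u0 < 1" and u0c: "q1 < u0"
    unfolding u0_def using \<eta>1 \<eta>pos q1lt by auto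
  define lam where "lam = q1 / (2 * \<eta>)"
  have lampos: "0 < lam" unfolding lam_def using q1pos \<eta>pos by simp
  have lameta: "lam * \<eta> = q1 / 2" unfolding lam_def using \<eta>pos by simp
  define s where "s = min cs (min (a1 / (1 + lam)) (- \<delta> * cs ^ 3 / 2))"
  have spos: "0 < s" unfolding s_def using cspos a1pos lampos \<delta>neg by (simp add: mult_neg_pos)
  have s1: "s \<le> cs" and s2: "s * (1 + lam) \<le> a1" and s3: "s \<le> - \<delta> * cs ^ 3 / 2"
  proof -
    show "s \<le> cs" unfolding s_def by (rule min.cobounded1)
    have "s \<le> a1 / (1 + lam)" unfolding s_def by (meson min.cobounded1 min.cobounded2 order_trans)
    then show "s * (1 + lam) \<le> a1" using lampos by (simp add: field_simps)
    show "s \<le> - \<delta> * cs ^ 3 / 2" unfolding s_def by (meson min.cobounded2 order_trans)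
  qed
  define \<psi> where "\<psi> t = \<phi> t + s * (max t q1 - max t 0) + s * lam * (max t q1 - max t u0)" for t
  have psiC: "\<psi> \<in> classC"
  proof -
    define \<psi>' where "\<psi>' t = \<phi> 1 + (\<Sum>q\<in>Q-{q1}. a q * (1 - max t q)) + (a1 - s - s * lam) * (1 - max t q1)
       + s * (1 - max t 0) + (s * lam) * (1 - max t u0)" for t
    have h1: "(\<lambda>t. \<phi> 1) \<in> classC" by (rule C_const[OF c0])
    have h2: "(\<lambda>t. \<Sum>q\<in>Q-{q1}. a q * (1 - max t q)) \<in> classC"
    proof (rule C_sum)
      show "finite (Q - {q1})" using fin by simp
      fix q assume "q \<in> Q - {q1}"
      then have "q \<le> 1" "0 \<le> a q" using Qsub apos by (auto simp: less_imp_le)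
      then show "(\<lambda>t. a q * (1 - max t q)) \<in> classC" by (intro C_scale C_atom)
    qed
    have w: "0 \<le> a1 - s - s * lam" using s2 by (simp add: algebra_simps)
    have h3: "(\<lambda>t. (a1 - s - s * lam) * (1 - max t q1)) \<in> classC"
      using w q1lt by (intro C_scale C_atom) auto
    have h4: "(\<lambda>t. s * (1 - max t 0)) \<in> classC"
      using spos by (intro C_scale C_atom) auto
    have h5: "(\<lambda>t. (s * lam) * (1 - max t u0)) \<in> classC"
      using spos lampos u0b by (intro C_scale C_atom) auto
    have C': "\<psi>' \<in> classC"
      using C_add[OF C_add[OF C_add[OF C_add[OF h1 h2] h3] h4] h5] unfolding \<psi>'_def[abs_def] by simp
    show ?thesis
    proof (rule C_cong[OF C'])
      fix t :: real assume t: "t \<in> {0..1}"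
      have "(\<Sum>q\<in>Q. a q * (1 - max t q)) = a1 * (1 - max t q1) + (\<Sum>q\<in>Q-{q1}. a q * (1 - max t q))"
        unfolding a1_def using sum.remove[OF fin q1Q] .
      then show "\<psi> t = \<psi>' t" unfolding \<psi>_def \<psi>'_def using rf[OF t] by (simp add: algebra_simps)
    qed
  qed
  have psi_tail: "\<And>t. u0 < t \<Longrightarrow> \<psi> t = \<phi> t"
    unfolding \<psi>_def using u0c q1pos by simp
  have psi_low: "\<And>t. 0 \<le> t \<Longrightarrow> t \<le> q1 \<Longrightarrow> \<psi> t = A + s * (q1 / 2 - t)"
  proof -
    fix t :: real assume t: "0 \<le> t" "t \<le> q1"
    have "\<psi> t = A + s * (q1 - t) + s * lam * (q1 - u0)"
      unfolding \<psi>_def using t u0c phi_const[OF t] by simp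
    also have "s * lam * (q1 - u0) = - s * (lam * \<eta>)" unfolding u0_def by (simp add: algebra_simps)
    also have "- s * (lam * \<eta>) = - s * (q1 / 2)" using lameta by simp
    finally show "\<psi> t = A + s * (q1 / 2 - t)" by (simp add: algebra_simps)
  qed
  have psi_mid: "\<And>t. q1 \<le> t \<Longrightarrow> t \<le> u0 \<Longrightarrow> \<psi> t = \<phi> t + s * lam * (t - u0)"
    unfolding \<psi>_def using q1pos by simp
  have phicont: "continuous_on {0..1} \<phi>" using phiC by (simp add: classC_def)
  have psicont: "continuous_on {0..1} \<psi>" using psiC by (simp add: classC_def)
  have phi_pos: "\<And>t. t \<in> {0..u0} \<Longrightarrow> \<phi> t \<ge> cs" using phi_lb u0a by auto
  have psi_pos: "\<And>t. t \<in> {0..u0} \<Longrightarrow> \<psi> t \<ge> cs / 2"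
  proof -
    fix t assume t: "t \<in> {0..u0}"
    show "\<psi> t \<ge> cs / 2"
    proof (cases "t \<le> q1")
      case True
      have "s * (- 1 / 2) \<le> s * (q1 / 2 - t)" using spos True t q1lt by (intro mult_left_mono) auto
      then show ?thesis using psi_low[of t] True t Acs s1 by auto
    next
      case False
      have "lam * (- \<eta>) \<le> lam * (t - u0)" using lampos False unfolding u0_def by (intro mult_left_mono) auto
      then have "s * (lam * (- \<eta>)) \<le> s * (lam * (t - u0))" by (rule mult_left_mono) (use spos in auto)
      then have "- (s * (lam * \<eta>)) \<le> s * lam * (t - u0)" by (simp add: mult.assoc)
      then have "- s * (q1 / 2) \<le> s * lam * (t - u0)" using lameta by simp
      moreover have "s * (q1 / 2) \<le> s * (1 / 2)" using spos q1lt by (intro mult_left_mono) auto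
      ultimately show ?thesis using psi_mid[of t] False t phi_pos[OF t] s1 by auto
    qed
  qed
  have psi_pos': "\<And>t. t \<in> {0..u0} \<Longrightarrow> \<psi> t > 0"
  proof -
    fix t assume "t \<in> {0..u0}"
    from psi_pos[OF this] cspos show "\<psi> t > 0" by simp
  qed
  define gp where "gp = (\<lambda>t. Yc t * \<phi> t + 1 / \<phi> t)"
  define gq where "gq = (\<lambda>t. Yc t * \<psi> t + 1 / \<psi> t)"
  have sub0: "{0..u0} \<subseteq> {0..1}" using u0b by auto
  have Ycc': "continuous_on {0..u0} Yc" using continuous_on_subset[OF Ycc sub0] .
  have gpc: "continuous_on {0..u0} gp"
  proof -
    have nz: "\<And>x. x \<in> {0..u0} \<Longrightarrow> \<phi> x \<noteq> 0" using phi_pos cspos by fastforce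
    have pc: "continuous_on {0..u0} \<phi>" by (rule continuous_on_subset[OF phicont sub0])
    show ?thesis unfolding gp_def using Ycc' pc nz by (intro continuous_intros) auto
  qed
  have gqc: "continuous_on {0..u0} gq"
  proof -
    have nz: "\<And>x. x \<in> {0..u0} \<Longrightarrow> \<psi> x \<noteq> 0" using psi_pos cspos by fastforce
    have pc: "continuous_on {0..u0} \<psi>" by (rule continuous_on_subset[OF psicont sub0])
    show ?thesis unfolding gq_def using Ycc' pc nz by (intro continuous_intros) auto
  qed
  have gpi: "gp integrable_on {0..u0}" by (rule integrable_continuous_interval[OF gpc])
  have gqi: "gq integrable_on {0..u0}" by (rule integrable_continuous_interval[OF gqc])
  have subA: "{0..q1} \<subseteq> {0..u0}" and subB: "{q1..u0} \<subseteq> {0..u0}" using u0c q1pos by auto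
  have gpi1: "(gp has_integral integral {0..q1} gp) {0..q1}"
    using integrable_on_subinterval[OF gpi subA] by (rule integrable_integral)
  have gqi1: "(gq has_integral integral {0..q1} gq) {0..q1}"
    using integrable_on_subinterval[OF gqi subA] by (rule integrable_integral)
  have gpi2: "(gp has_integral integral {q1..u0} gp) {q1..u0}"
    using integrable_on_subinterval[OF gpi subB] by (rule integrable_integral)
  have gqi2: "(gq has_integral integral {q1..u0} gq) {q1..u0}"
    using integrable_on_subinterval[OF gqi subB] by (rule integrable_integral)
  define K where "K = s\<^sup>2 / (2 * cs ^ 3)"
  define UB where "UB = (\<lambda>t. s * (Yc t * (q1/2 - t) - (q1/2 - t) * (1 / A\<^sup>2)) + K)"
  have hUB: "(UB has_integral (s * \<delta> + K * q1)) {0..q1}"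
    unfolding UB_def \<delta>_def
  proof (rule ftc_part[where q=q1 and Pa=Ya and Pb=Yb and Pc=Yc and s=s and B="1 / A\<^sup>2" and K=K])
    fix x assume "x \<in> {0..q1}"
    then have x: "x \<in> {0..1}" using q1lt by auto
    show "(Ya has_real_derivative Yb x) (at x)" by (rule d0[OF x])
    show "(Yb has_real_derivative Yc x) (at x)" by (rule d1[OF x])
  qed (use z0 z1 q1pos in auto)
  have ineq1: "gq t \<le> gp t + UB t" if t: "t \<in> {0..q1}" for t
  proof -
    define x where "x = s * (q1 / 2 - t)"
    have t': "t \<in> {0..u0}" using t u0c by auto
    have psit: "\<psi> t = A + x" unfolding x_def using psi_low t by auto
    have phit: "\<phi> t = A" using phi_const t by auto
    have "\<bar>q1 / 2 - t\<bar> \<le> 1 / 2" using t q1lt by (intro abs_leI) auto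
    then have "\<bar>x\<bar> \<le> s * (1 / 2)" unfolding x_def using spos by (simp add: abs_mult mult_left_mono)
    then have rb: "1 / (A + x) - 1 / A \<le> - x * (1 / A\<^sup>2) + K"
      unfolding K_def using recip_bound[of cs A x s] cspos Acs psi_pos[OF t'] psit by auto
    have "gq t - gp t = Yc t * x + (1 / (A + x) - 1 / A)"
      unfolding gq_def gp_def psit phit by (simp add: algebra_simps)
    moreover have "UB t = Yc t * x - x * (1 / A\<^sup>2) + K"
    proof -
      have "\<And>B. s * (Yc t * (q1/2 - t) - (q1/2 - t) * B) + K = Yc t * (s * (q1/2 - t)) - s * (q1/2 - t) * B + K"
        by (simp add: algebra_simps)
      then show ?thesis unfolding UB_def x_def by blast
    qed
    ultimately show ?thesis using rb by linarith
  qed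
  have ineq2: "gq t \<le> gp t + s / cs\<^sup>2" if t: "t \<in> {q1..u0}" for t
  proof -
    have t': "t \<in> {0..u0}" using t q1pos by auto
    have psit: "\<psi> t = \<phi> t + s * lam * (t - u0)" using psi_mid t by auto
    have "lam * (t - u0) \<le> 0" using lampos t by (simp add: mult_nonneg_nonpos)
    then have le1: "s * lam * (t - u0) \<le> 0" using spos by (simp add: mult_nonneg_nonpos mult.assoc)
    have "lam * (u0 - t) \<le> lam * \<eta>" using lampos t unfolding u0_def by (intro mult_left_mono) auto
    then have "lam * (u0 - t) \<le> q1 / 2" using lameta by simp
    then have "s * (lam * (u0 - t)) \<le> s * (q1 / 2)" by (rule mult_left_mono) (use spos in auto)
    moreover have "s * (q1 / 2) \<le> s / 2" using spos q1lt by simp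
    ultimately have le2: "\<phi> t - \<psi> t \<le> s / 2" using psit by (simp add: algebra_simps)
    have "Yc t \<ge> 0" using Ycn t' sub0 by auto
    then show ?thesis unfolding gq_def gp_def
      using recip_bound2[of cs "\<phi> t" "\<psi> t" s "Yc t"] cspos phi_pos[OF t'] psi_pos[OF t'] psit le1 le2 by auto
  qed
  have int1: "integral {0..q1} gq \<le> integral {0..q1} gp + (s * \<delta> + K * q1)"
    by (rule has_integral_le[OF gqi1 has_integral_add[OF gpi1 hUB]]) (use ineq1 in auto)
  have hc: "((\<lambda>_. s / cs\<^sup>2) has_integral (u0 - q1) * (s / cs\<^sup>2)) {q1..u0}"
    using has_integral_const_real[of "s / cs\<^sup>2" q1 u0] u0c by simp
  have int2: "integral {q1..u0} gq \<le> integral {q1..u0} gp + (u0 - q1) * (s / cs\<^sup>2)"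
    by (rule has_integral_le[OF gqi2 has_integral_add[OF gpi2 hc]]) (use ineq2 in auto)
  have e1: "(u0 - q1) * (s / cs\<^sup>2) \<le> - \<delta> * s / 4"
  proof -
    have "\<eta> * (s / cs\<^sup>2) \<le> (- \<delta> * cs\<^sup>2 / 4) * (s / cs\<^sup>2)"
      using \<eta>2 spos cspos by (intro mult_right_mono) auto
    also have "\<dots> = - \<delta> * s / 4" using cspos by (simp add: field_simps)
    finally show ?thesis unfolding u0_def by simp
  qed
  have e2: "K * q1 \<le> - \<delta> * s / 4"
  proof -
    have K0: "0 \<le> K" unfolding K_def using cspos by simp
    have "K * q1 \<le> K" using K0 q1lt by (simp add: mult_left_le)
    also have "K = s * (s / (2 * cs ^ 3))" unfolding K_def by (simp add: power2_eq_square)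
    also have "s / (2 * cs ^ 3) \<le> (- \<delta> * cs ^ 3 / 2) / (2 * cs ^ 3)"
      using s3 cspos by (intro divide_right_mono) auto
    then have "s * (s / (2 * cs ^ 3)) \<le> s * ((- \<delta> * cs ^ 3 / 2) / (2 * cs ^ 3))"
      using spos by (intro mult_left_mono) auto
    also have "s * ((- \<delta> * cs ^ 3 / 2) / (2 * cs ^ 3)) = - \<delta> * s / 4" using cspos by (simp add: field_simps)
    finally show ?thesis .
  qed
  have sd: "s * \<delta> < 0" using spos \<delta>neg by (simp add: mult_pos_neg)
  have comb_p: "integral {0..u0} gp = integral {0..q1} gp + integral {q1..u0} gp"
    using Henstock_Kurzweil_Integration.integral_combine[where a=0 and c=q1 and b=u0 and f=gp] q1pos u0c gpi by simp
  have comb_q: "integral {0..u0} gq = integral {0..q1} gq + integral {q1..u0} gq"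
    using Henstock_Kurzweil_Integration.integral_combine[where a=0 and c=q1 and b=u0 and f=gq] q1pos u0c gqi by simp
  have Ilt: "integral {0..u0} gq < integral {0..u0} gp"
  proof -
    have "- \<delta> * s / 4 = - (s * \<delta>) / 4" by (simp add: mult.commute)
    then show ?thesis using comb_p comb_q int1 int2 e1 e2 sd by linarith
  qed
  have Iq0: "0 \<le> integral {0..u0} gq"
  proof (rule integral_nonneg[OF gqi])
    fix x assume x: "x \<in> {0..u0}"
    have "0 \<le> Yc x" using Ycn x sub0 by auto
    moreover have "0 < \<psi> x" using psi_pos[OF x] cspos by auto
    ultimately show "0 \<le> gq x" unfolding gq_def by simp
  qed
  have DXu: "\<And>x. x \<in> {0..u0} \<Longrightarrow> D x = Yc x" using DX sub0 unfolding D_def by auto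
  have Ycnu: "\<And>x. x \<in> {0..u0} \<Longrightarrow> Yc x \<ge> 0" using Ycn sub0 by auto
  have Pp: "P0 \<beta> \<phi> = ennreal (integral {0..u0} gp) + (\<integral>\<^sup>+x. Fi D \<phi> x * indicator {u0<..1} x \<partial>lborel)"
  proof -
    have "P0 \<beta> \<phi> = (\<integral>\<^sup>+x. Fi D \<phi> x * indicator {0..u0} x \<partial>lborel) + (\<integral>\<^sup>+x. Fi D \<phi> x * indicator {u0<..1} x \<partial>lborel)"
      unfolding P0_Fi D_def[symmetric]
      by (rule L_split[OF phicont _ _ _ Ycc]) (use u0c q1pos u0b DX in \<open>auto simp: D_def\<close>)
    also have "(\<integral>\<^sup>+x. Fi D \<phi> x * indicator {0..u0} x \<partial>lborel) = ennreal (integral {0..u0} gp)"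
      unfolding gp_def
      by (rule L_piece[OF _ DXu Ycc' Ycnu continuous_on_subset[OF phicont sub0]])
         (use u0c q1pos phi_pos cspos in \<open>auto intro: less_le_trans\<close>)
    finally show ?thesis .
  qed
  have Pq: "P0 \<beta> \<psi> = ennreal (integral {0..u0} gq) + (\<integral>\<^sup>+x. Fi D \<psi> x * indicator {u0<..1} x \<partial>lborel)"
  proof -
    have "P0 \<beta> \<psi> = (\<integral>\<^sup>+x. Fi D \<psi> x * indicator {0..u0} x \<partial>lborel) + (\<integral>\<^sup>+x. Fi D \<psi> x * indicator {u0<..1} x \<partial>lborel)"
      unfolding P0_Fi D_def[symmetric]
      by (rule L_split[OF psicont _ _ _ Ycc]) (use u0c q1pos u0b DX in \<open>auto simp: D_def\<close>)
    also have "(\<integral>\<^sup>+x. Fi D \<psi> x * indicator {0..u0} x \<partial>lborel) = ennreal (integral {0..u0} gq)"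
      unfolding gq_def
      by (rule L_piece[OF _ DXu Ycc' Ycnu continuous_on_subset[OF psicont sub0]])
         (use u0c q1pos psi_pos' in auto)
    finally show ?thesis .
  qed
  have tail: "(\<integral>\<^sup>+x. Fi D \<psi> x * indicator {u0<..1} x \<partial>lborel) = (\<integral>\<^sup>+x. Fi D \<phi> x * indicator {u0<..1} x \<partial>lborel)"
  proof (rule nn_integral_cong)
    fix x :: real
    show "Fi D \<psi> x * indicator {u0<..1} x = Fi D \<phi> x * indicator {u0<..1} x"
      by (cases "x \<in> {u0<..1}") (auto simp: Fi_def psi_tail)
  qed
  define R where "R = (\<integral>\<^sup>+x. Fi D \<phi> x * indicator {u0<..1} x \<partial>lborel)"
  have P1: "P0 \<beta> (\<lambda>_. 1) < \<infinity>"
  proof -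
    have DYb: "\<And>x. x \<in> {0..1} \<Longrightarrow> D x = Yc x" using DX unfolding D_def by auto
    have "P0 \<beta> (\<lambda>_. 1) = ennreal (integral {0..1} (\<lambda>x. Yc x * 1 + 1 / 1))"
      unfolding P0_Fi D_def[symmetric]
      by (rule L_piece[OF _ DYb Ycc Ycn]) auto
    then show ?thesis by simp
  qed
  have "P0 \<beta> \<phi> \<le> P0 \<beta> (\<lambda>_. 1)" using minim C_const[of 1] by auto
  then have Rfin: "R \<noteq> \<infinity>" using Pp P1 unfolding R_def
    by (metis add.commute le_iff_add linorder_not_le order.strict_trans1 top.not_eq_extremum top_greatest)
  have "ennreal (integral {0..u0} gq) < ennreal (integral {0..u0} gp)"
    using Ilt Iq0 by (simp add: ennreal_less_iff)
  then have "R + ennreal (integral {0..u0} gq) < R + ennreal (integral {0..u0} gp)"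
    using Rfin by (simp add: ennreal_add_left_cancel_less)
  then have "P0 \<beta> \<psi> < P0 \<beta> \<phi>" using Pp Pq tail unfolding R_def by (simp add: add.commute)
  moreover have "P0 \<beta> \<phi> \<le> P0 \<beta> \<psi>" using minim psiC by auto
  ultimately show False by simp
qed

lemma pure_contra:
  fixes \<beta> :: "nat \<Rightarrow> real" and \<phi> :: "real \<Rightarrow> real"
  assumes b: "0 < b" and DX: "\<And>x. deriv (deriv (xi \<beta>)) x = 2 * b"
    and phiC: "\<phi> \<in> classC" and minim: "\<forall>\<psi>\<in>classC. P0 \<beta> \<phi> \<le> P0 \<beta> \<psi>"
    and rep: "atomic_repr \<phi> Q a" and Qne: "Q \<noteq> {}" and Q0: "0 \<notin> Q"
  shows False
proof -
  define D where "D = deriv (deriv (xi \<beta>))"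
  have Db: "\<And>x. D x = 2 * b" unfolding D_def by (rule DX)
  define r where "r = sqrt (2 * b)"
  have rpos: "0 < r" unfolding r_def using b by simp
  have r2: "r\<^sup>2 = 2 * b" unfolding r_def using b by simp
  have fid: "\<And>y. 0 < y \<Longrightarrow> 2 * b * y + 1 / y = 2 * r + (r * y - 1)\<^sup>2 / y"
    using r2[symmetric] by (simp add: field_simps power2_eq_square)
  have Fige: "ennreal v \<le> Fi D \<phi> x"
    if x: "x \<in> {0..1}" and v: "\<And>y. y = \<phi> x \<Longrightarrow> 0 < y \<Longrightarrow> v \<le> 2 * r + (r * y - 1)\<^sup>2 / y" for x v
  proof (cases "\<phi> x > 0")
    case True
    have "ennreal v \<le> ennreal (2 * b * \<phi> x + 1 / \<phi> x)"
      using v[OF refl True] fid[OF True] by (intro ennreal_leI) simp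
    also have "\<dots> = ennreal (2 * b * \<phi> x) + ennreal (1 / \<phi> x)"
      by (rule ennreal_plus) (use True b in auto)
    also have "\<dots> = Fi D \<phi> x" using True by (simp add: Fi_def Db)
    finally show ?thesis .
  next
    case False then show ?thesis by (simp add: Fi_def)
  qed
  have fin: "finite Q" and Qsub: "Q \<subseteq> {0..<1}" and apos: "\<forall>q\<in>Q. 0 < a q"
    using rep unfolding atomic_repr_def by blast+
  define q1 where "q1 = Min Q"
  have q1Q: "q1 \<in> Q" unfolding q1_def using fin Qne by (rule Min_in)
  have qmin: "\<And>q. q \<in> Q \<Longrightarrow> q1 \<le> q" unfolding q1_def using fin by simp
  have q1pos: "0 < q1" using q1Q Qsub Q0 by (metis atLeastLessThan_iff less_eq_real_def subsetD)
  have q1lt: "q1 < 1" using q1Q Qsub by auto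
  define a1 where "a1 = a q1"
  have a1pos: "0 < a1" using apos q1Q a1_def by simp
  have rf: "\<And>t. t \<in> {0..1} \<Longrightarrow> \<phi> t = \<phi> 1 + (\<Sum>q\<in>Q. a q * (1 - max t q))"
    using repr_formula[OF rep] by blast
  have c0: "\<phi> 1 \<ge> 0" using phiC by (auto simp: classC_def)
  have termnn: "\<And>t q. t \<le> 1 \<Longrightarrow> q \<in> Q \<Longrightarrow> 0 \<le> a q * (1 - max t q)"
    using apos Qsub by (intro mult_nonneg_nonneg) (auto simp: less_imp_le)
  have lowb: "\<And>t. t \<in> {0..1} \<Longrightarrow> \<phi> t \<ge> a1 * (1 - max t q1)"
  proof -
    fix t :: real assume t: "t \<in> {0..1}"
    have "a1 * (1 - max t q1) \<le> (\<Sum>q\<in>Q. a q * (1 - max t q))"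
      unfolding a1_def using t by (intro member_le_sum q1Q fin termnn) auto
    then show "\<phi> t \<ge> a1 * (1 - max t q1)" using rf[OF t] c0 by simp
  qed
  define A where "A = \<phi> 0"
  have drop: "\<And>t. t \<in> {0..1} \<Longrightarrow> \<phi> t \<le> A - a1 * (max t q1 - q1)"
  proof -
    fix t :: real assume t: "t \<in> {0..1}"
    have "A - \<phi> t = (\<Sum>q\<in>Q. a q * (max t q - max 0 q))"
      unfolding A_def using rf[OF t] rf[of 0] by (simp add: sum_subtractf[symmetric] algebra_simps)
    moreover have "a1 * (max t q1 - max 0 q1) \<le> (\<Sum>q\<in>Q. a q * (max t q - max 0 q))"
      unfolding a1_def using apos Qsub
      by (intro member_le_sum q1Q fin mult_nonneg_nonneg) (auto simp: less_imp_le max_def subset_iff)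
    ultimately show "\<phi> t \<le> A - a1 * (max t q1 - q1)" using q1pos by simp
  qed
  have phi_const: "\<And>t. 0 \<le> t \<Longrightarrow> t \<le> q1 \<Longrightarrow> \<phi> t = A"
  proof -
    fix t :: real assume t: "0 \<le> t" "t \<le> q1"
    have "(\<Sum>q\<in>Q. a q * (1 - max t q)) = (\<Sum>q\<in>Q. a q * (1 - max 0 q))"
    proof (rule sum.cong[OF refl])
      fix q assume "q \<in> Q"
      then have "q1 \<le> q" "0 \<le> q" using qmin Qsub by auto
      then show "a q * (1 - max t q) = a q * (1 - max 0 q)" using t by simp
    qed
    then show "\<phi> t = A" unfolding A_def using rf[of t] rf[of 0] t q1lt by simp
  qed
  have Apos: "0 < A"
  proof -
    have "0 < a1 * (1 - q1)" using a1pos q1lt by simp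
    then show ?thesis using lowb[of 0] q1lt q1pos unfolding A_def by simp
  qed
  obtain \<alpha> \<gamma> e where ag: "0 \<le> \<alpha>" "\<alpha> < \<gamma>" "\<gamma> \<le> 1" and ep: "0 < e"
    and eJ: "\<And>x. x \<in> {\<alpha>..\<gamma>} \<Longrightarrow> \<phi> x > 0 \<and> e \<le> (r * \<phi> x - 1)\<^sup>2 / \<phi> x"
  proof (cases "r * A = 1")
    case False
    show ?thesis
    proof (rule that[of 0 q1 "(r * A - 1)\<^sup>2 / A"])
      show "0 < (r * A - 1)\<^sup>2 / A" using False Apos by simp
      fix x assume "x \<in> {0..q1}"
      then show "\<phi> x > 0 \<and> (r * A - 1)\<^sup>2 / A \<le> (r * \<phi> x - 1)\<^sup>2 / \<phi> x" using phi_const Apos by auto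
    qed (use q1pos q1lt in auto)
  next
    case True
    define d where "d = (1 - q1) / 4"
    have dpos: "0 < d" unfolding d_def using q1lt by simp
    show ?thesis
    proof (rule that[of "q1 + d" "q1 + 2 * d" "(r * a1 * d)\<^sup>2 / A"])
      show "0 < (r * a1 * d)\<^sup>2 / A" using rpos a1pos dpos Apos by simp
      fix x assume x: "x \<in> {q1 + d..q1 + 2 * d}"
      have xl: "q1 + d \<le> x" and xu: "x \<le> q1 + 2 * d" using x by auto
      have "0 \<le> x" using xl q1pos dpos by linarith
      moreover have "x \<le> 1"
      proof -
        have "q1 + 2 * d < 1" unfolding d_def using q1lt by (simp add: field_simps)
        then show ?thesis using xu by linarith
      qed
      ultimately have x01: "x \<in> {0..1}" by simp
      have mx: "max x q1 = x" using xl dpos by simp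
      have "\<phi> x \<ge> a1 * (1 - max x q1)" using lowb[OF x01] .
      moreover have "1 - max x q1 > 0"
      proof -
        have "q1 + 2 * d < 1" unfolding d_def using q1lt by (simp add: field_simps)
        then show ?thesis unfolding mx using xu by linarith
      qed
      ultimately have px: "\<phi> x > 0" using a1pos by (meson less_le_trans mult_pos_pos)
      have "\<phi> x \<le> A - a1 * (max x q1 - q1)" using drop[OF x01] .
      moreover have "a1 * d \<le> a1 * (max x q1 - q1)" unfolding mx using xl a1pos by (intro mult_left_mono) auto
      ultimately have ub: "\<phi> x \<le> A - a1 * d" by simp
      then have "r * \<phi> x \<le> r * (A - a1 * d)" using rpos by (simp add: mult_left_mono)
      then have "r * a1 * d \<le> 1 - r * \<phi> x" using True by (simp add: algebra_simps)
      moreover have "0 \<le> r * a1 * d" using rpos a1pos dpos by simp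
      ultimately have "(r * a1 * d)\<^sup>2 \<le> (1 - r * \<phi> x)\<^sup>2"
        by (intro power_mono) auto
      then have sq: "(r * a1 * d)\<^sup>2 \<le> (r * \<phi> x - 1)\<^sup>2" by (simp add: power2_commute)
      have "0 < a1 * d" using a1pos dpos by simp
      then have "\<phi> x \<le> A" using ub by linarith
      then have "(r * a1 * d)\<^sup>2 / A \<le> (r * \<phi> x - 1)\<^sup>2 / \<phi> x"
        using sq px by (intro frac_le) auto
      then show "\<phi> x > 0 \<and> (r * a1 * d)\<^sup>2 / A \<le> (r * \<phi> x - 1)\<^sup>2 / \<phi> x" using px by simp
    qed (use q1pos q1lt dpos in \<open>auto simp: d_def field_simps\<close>)
  qed
  have Jsub: "{\<alpha>..\<gamma>} \<subseteq> {0..1}" using ag by auto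
  have pw: "ennreal (2 * r) * indicator {0..1} x + ennreal e * indicator {\<alpha>..\<gamma>} x \<le> Fi D \<phi> x * indicator {0..1} x" for x
  proof (cases "x \<in> {0..1}")
    case True
    show ?thesis
    proof (cases "x \<in> {\<alpha>..\<gamma>}")
      case J: True
      have "ennreal (2 * r + e) \<le> Fi D \<phi> x"
        using eJ[OF J] by (intro Fige True) auto
      moreover have "ennreal (2 * r) + ennreal e = ennreal (2 * r + e)"
        by (rule ennreal_plus[symmetric]) (use rpos ep in auto)
      ultimately show ?thesis using True J by simp
    next
      case False
      have "ennreal (2 * r + 0) \<le> Fi D \<phi> x"
        by (intro Fige True) simp
      then show ?thesis using True False by simp
    qed
  next
    case False then show ?thesis using Jsub by (auto simp: indicator_def)
  qed
  have "(\<integral>\<^sup>+x. ennreal (2 * r) * indicator {0..1} x + ennreal e * indicator {\<alpha>..\<gamma>} x \<partial>lborel)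
      = ennreal (2 * r) + ennreal (e * (\<gamma> - \<alpha>))"
  proof -
    have "(\<integral>\<^sup>+x. ennreal (2 * r) * indicator {0..1} x + ennreal e * indicator {\<alpha>..\<gamma>} x \<partial>lborel)
      = (\<integral>\<^sup>+x. ennreal (2 * r) * indicator {0..1::real} x \<partial>lborel) + (\<integral>\<^sup>+x. ennreal e * indicator {\<alpha>..\<gamma>} x \<partial>lborel)"
      by (rule nn_integral_add[of "\<lambda>x. ennreal (2 * r) * indicator {0..1} x" lborel "\<lambda>x. ennreal e * indicator {\<alpha>..\<gamma>} x"]) auto
    also have "(\<integral>\<^sup>+x. ennreal (2 * r) * indicator {0..1::real} x \<partial>lborel) = ennreal (2 * r) * emeasure lborel {0..1::real}"
      by (rule nn_integral_cmult_indicator) simp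
    also have "(\<integral>\<^sup>+x. ennreal e * indicator {\<alpha>..\<gamma>} x \<partial>lborel) = ennreal e * emeasure lborel {\<alpha>..\<gamma>}"
      by (rule nn_integral_cmult_indicator) simp
    also have "emeasure lborel {0..1::real} = ennreal 1" by simp
    also have "emeasure lborel {\<alpha>..\<gamma>} = ennreal (\<gamma> - \<alpha>)" using ag by simp
    also have "ennreal e * ennreal (\<gamma> - \<alpha>) = ennreal (e * (\<gamma> - \<alpha>))"
      by (rule ennreal_mult[symmetric]) (use ep ag in auto)
    finally show ?thesis by simp
  qed
  moreover have "(\<integral>\<^sup>+x. ennreal (2 * r) * indicator {0..1} x + ennreal e * indicator {\<alpha>..\<gamma>} x \<partial>lborel) \<le> P0 \<beta> \<phi>"
    unfolding P0_Fi D_def[symmetric] by (rule nn_integral_mono) (rule pw)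
  ultimately have lb: "ennreal (2 * r) + ennreal (e * (\<gamma> - \<alpha>)) \<le> P0 \<beta> \<phi>" by simp
  define xs where "xs = 1 / r"
  have xsC: "(\<lambda>_. xs) \<in> classC" by (rule C_const) (use rpos in \<open>simp add: xs_def\<close>)
  have xsp: "0 < xs" unfolding xs_def using rpos by simp
  have Fxs: "Fi D (\<lambda>_. xs) x = ennreal (2 * r)" for x
  proof -
    have e1: "D x * xs = r" unfolding xs_def Db using r2[symmetric] rpos by (simp add: power2_eq_square)
    have e2: "1 / xs = r" unfolding xs_def by simp
    have "Fi D (\<lambda>_. xs) x = ennreal (D x * xs) + ennreal (1 / xs)" unfolding Fi_def using xsp by simp
    also have "\<dots> = ennreal r + ennreal r" unfolding e1 e2 ..
    also have "\<dots> = ennreal (r + r)" by (rule ennreal_plus[symmetric]) (use rpos in auto)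
    also have "r + r = 2 * r" by simp
    finally show ?thesis .
  qed
  have "P0 \<beta> (\<lambda>_. xs) = (\<integral>\<^sup>+x. ennreal (2 * r) * indicator {0..1::real} x \<partial>lborel)"
    unfolding P0_Fi D_def[symmetric] Fxs ..
  also have "\<dots> = ennreal (2 * r) * emeasure lborel {0..1::real}"
    by (rule nn_integral_cmult_indicator) simp
  also have "emeasure lborel {0..1::real} = 1" by simp
  finally have Pxs: "P0 \<beta> (\<lambda>_. xs) = ennreal (2 * r)" by simp
  have "P0 \<beta> \<phi> \<le> P0 \<beta> (\<lambda>_. xs)" using minim xsC by auto
  from order_trans[OF lb this] have le: "ennreal (2 * r) + ennreal (e * (\<gamma> - \<alpha>)) \<le> ennreal (2 * r)" unfolding Pxs .
  have "ennreal (2 * r) + ennreal (e * (\<gamma> - \<alpha>)) = ennreal (2 * r + e * (\<gamma> - \<alpha>))"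
    by (rule ennreal_plus[symmetric]) (use rpos ep ag in auto)
  with le have "ennreal (2 * r + e * (\<gamma> - \<alpha>)) \<le> ennreal (2 * r)" by simp
  then have "2 * r + e * (\<gamma> - \<alpha>) \<le> 2 * r" using ennreal_le_iff[of "2 * r" "2 * r + e * (\<gamma> - \<alpha>)"] rpos by linarith
  moreover have "0 < e * (\<gamma> - \<alpha>)" using ep ag by simp
  ultimately show False by simp
qed

lemma lemma_pre:
  fixes \<beta> :: "nat \<Rightarrow> real" and \<phi> :: "real \<Rightarrow> real"
  assumes model: "is_model \<beta>" and phiC: "\<phi> \<in> classC" and minim: "\<forall>\<psi>\<in>classC. P0 \<beta> \<phi> \<le> P0 \<beta> \<psi>"
    and rep: "atomic_repr \<phi> Q a" and Qne: "Q \<noteq> {}"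
  shows "0 \<in> Q"
proof (rule ccontr)
  assume Q0: "0 \<notin> Q"
  obtain \<epsilon> where b0: "\<beta> 0 = 0" and b1: "\<beta> 1 = 0" and bex: "\<exists>p. \<beta> p \<noteq> 0" and \<epsilon>: "\<epsilon> > 0"
    and sm: "summable (\<lambda>p. (\<beta> p)\<^sup>2 * (1 + \<epsilon>) ^ p)"
    using model unfolding is_model_def by blast
  define c where "c p = (\<beta> p)\<^sup>2" for p
  define R where "R = 1 + \<epsilon>"
  have R1: "1 < R" unfolding R_def using \<epsilon> by simp
  have cv: "conv c R" unfolding conv_def
  proof (intro allI impI)
    fix z :: real assume "\<bar>z\<bar> < R"
    then have "norm z < norm (1 + \<epsilon>)" unfolding R_def using \<epsilon> by simp
    from powser_inside[OF sm this] show "summable (\<lambda>n. c n * z ^ n)" unfolding c_def .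
  qed
  have xiS: "xi \<beta> = S c" unfolding xi_def[abs_def] S_def[abs_def] c_def by simp
  have cnn: "\<And>n. c n \<ge> 0" unfolding c_def by simp
  have c0: "c 0 = 0" and c1: "c 1 = 0" unfolding c_def using b0 b1 by simp_all
  show False
  proof (cases "\<exists>p\<ge>3. \<beta> p \<noteq> 0")
    case True
    then obtain p where p: "p \<ge> 3" "\<beta> p \<noteq> 0" by blast
    have in01: "\<And>x. x \<in> {0..1} \<Longrightarrow> \<bar>x\<bar> < R" using R1 by auto
    show False
    proof (rule gen_contra[where Ya="S c" and Yb="S (diffs c)" and Yc="S (diffs (diffs c))", OF _ _ _ _ _ _ _ _ phiC minim rep Qne Q0])
      fix x :: real assume x: "x \<in> {0..1}"
      show "deriv (deriv (xi \<beta>)) x = S (diffs (diffs c)) x" unfolding xiS by (rule deriv2_S[OF cv in01[OF x]])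
      show "S (diffs (diffs c)) x \<ge> 0"
        by (rule S_nonneg[OF conv_diffs[OF conv_diffs[OF cv]]]) (use x R1 cnn in \<open>auto intro: diffs_nonneg\<close>)
      show "(S c has_real_derivative S (diffs c) x) (at x)" by (rule S_deriv[OF cv in01[OF x]])
      show "(S (diffs c) has_real_derivative S (diffs (diffs c)) x) (at x)" by (rule S_deriv[OF conv_diffs[OF cv] in01[OF x]])
    next
      show "continuous_on {0..1} (S (diffs (diffs c)))"
        by (rule S_cont[OF conv_diffs[OF conv_diffs[OF cv]]]) (use R1 in auto)
      show "S c 0 = 0" using c0 by (simp add: S_zero)
      show "S (diffs c) 0 = 0" using c1 by (simp add: S_zero diffs_def)
    next
      fix q :: real assume q: "0 < q" "q < 1"
      show "S c q - q * S (diffs c) q / 2 < 0"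
        by (rule S_key[OF cv cnn c0 c1 p(1)]) (use p q R1 in \<open>auto simp: c_def\<close>)
    qed
  next
    case False
    have bz: "\<beta> n = 0" if n: "n \<noteq> 2" for n
    proof -
      have "n = 0 \<or> n = 1 \<or> n \<ge> 3" using n by arith
      then show ?thesis using b0 b1 False by auto
    qed
    have b2: "\<beta> 2 \<noteq> 0" using bex bz by metis
    define b where "b = (\<beta> 2)\<^sup>2"
    have bpos: "0 < b" unfolding b_def using b2 by simp
    have xib: "xi \<beta> = (\<lambda>t. b * t ^ 2)"
    proof
      fix t :: real
      have "xi \<beta> t = (\<Sum>n\<in>{2}. (\<beta> n)\<^sup>2 * t ^ n)" unfolding xi_def
        by (rule suminf_finite) (use bz in auto)
      then show "xi \<beta> t = b * t ^ 2" unfolding b_def by simp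
    qed
    have d1: "deriv (\<lambda>t. b * t ^ 2) = (\<lambda>t. 2 * b * t)"
    proof
      fix t :: real
      show "deriv (\<lambda>t. b * t ^ 2) t = 2 * b * t"
        by (rule DERIV_imp_deriv) (auto intro!: derivative_eq_intros)
    qed
    have d2: "deriv (deriv (xi \<beta>)) x = 2 * b" for x
      unfolding xib d1 by (rule DERIV_imp_deriv) (auto intro!: derivative_eq_intros)
    show False by (rule pure_contra[OF bpos d2 phiC minim rep Qne Q0])
  qed
qed

theorem lemma1p20:
  fixes \<beta> :: "nat \<Rightarrow> real" and \<phi> :: "real \<Rightarrow> real" and k :: nat
  assumes "is_model \<beta>" and "k \<ge> 1"
    and "\<phi> \<in> classC" and "\<forall>\<psi>\<in>classC. P0 \<beta> \<phi> \<le> P0 \<beta> \<psi>"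
    and "\<phi> \<in> RSB k"
  shows "(\<exists>L. ((\<lambda>t. (\<phi> t - \<phi> 0) / t) \<longlongrightarrow> L) (at_right 0) \<and> L < 0)
    \<and> (\<forall>Q a. atomic_repr \<phi> Q a \<longrightarrow> 0 \<in> Q)"
proof -
  obtain Q0 a0 where rep0: "atomic_repr \<phi> Q0 a0" and card: "card Q0 = k"
    using assms(5) unfolding RSB_def by blast
  have Q0ne: "Q0 \<noteq> {}" using card assms(2) by auto
  have fin0: "finite Q0" and Q0sub: "Q0 \<subseteq> {0..<1}" and a0pos: "\<forall>q\<in>Q0. 0 < a0 q"
    using rep0 unfolding atomic_repr_def by blast+
  have all: "\<forall>Q a. atomic_repr \<phi> Q a \<longrightarrow> 0 \<in> Q"
  proof (intro allI impI)
    fix Q a assume rep: "atomic_repr \<phi> Q a"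
    show "0 \<in> Q"
    proof (cases "Q = {}")
      case True
      obtain q where q: "q \<in> Q0" using Q0ne by blast
      have q01: "q \<in> {0..1}" using q Q0sub by auto
      have "\<phi> q = \<phi> 1" using repr_formula[OF rep q01] True by simp
      moreover have "\<phi> q = \<phi> 1 + (\<Sum>q'\<in>Q0. a0 q' * (1 - max q q'))" using repr_formula[OF rep0 q01] .
      moreover have "a0 q * (1 - max q q) \<le> (\<Sum>q'\<in>Q0. a0 q' * (1 - max q q'))"
        using a0pos Q0sub q01 by (intro member_le_sum q fin0 mult_nonneg_nonneg) (auto simp: less_imp_le)
      moreover have "0 < a0 q * (1 - max q q)" using a0pos q Q0sub by auto
      ultimately show ?thesis by simp
    next
      case False
      show ?thesis by (rule lemma_pre[OF assms(1) assms(3) assms(4) rep False])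
    qed
  qed
  have z: "0 \<in> Q0" using all rep0 by blast
  define A where "A = a0 0"
  have Apos: "0 < A" unfolding A_def using a0pos z by simp
  define d where "d = Min (insert 1 (Q0 - {0}))"
  have dpos: "0 < d" unfolding d_def using fin0 Q0sub by (subst Min_gr_iff) auto
  have dle: "\<And>q. q \<in> Q0 - {0} \<Longrightarrow> d \<le> q" unfolding d_def using fin0 by simp
  have d1: "d \<le> 1" unfolding d_def using fin0 by simp
  have quot: "(\<phi> t - \<phi> 0) / t = - A" if t: "0 < t" "t < d" for t
  proof -
    have t01: "t \<in> {0..1}" using t d1 by auto
    have rest: "(\<Sum>q\<in>Q0 - {0}. a0 q * (1 - max t q)) = (\<Sum>q\<in>Q0 - {0}. a0 q * (1 - max 0 q))"
    proof (rule sum.cong[OF refl])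
      fix q assume q: "q \<in> Q0 - {0}"
      then have "t \<le> q" "0 \<le> q" using dle[OF q] t Q0sub by auto
      then show "a0 q * (1 - max t q) = a0 q * (1 - max 0 q)" by simp
    qed
    have "\<phi> t = \<phi> 1 + (A * (1 - max t 0) + (\<Sum>q\<in>Q0 - {0}. a0 q * (1 - max t q)))"
      using repr_formula[OF rep0 t01] sum.remove[OF fin0 z, of "\<lambda>q. a0 q * (1 - max t q)"] unfolding A_def by simp
    moreover have "\<phi> 0 = \<phi> 1 + (A * (1 - max 0 0) + (\<Sum>q\<in>Q0 - {0}. a0 q * (1 - max 0 q)))"
      using repr_formula[OF rep0, of 0] sum.remove[OF fin0 z, of "\<lambda>q. a0 q * (1 - max 0 q)"] unfolding A_def by simp
    ultimately have "\<phi> t - \<phi> 0 = - A * t" using rest t by (simp add: algebra_simps)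
    then show ?thesis using t by simp
  qed
  have ev: "eventually (\<lambda>t. (\<phi> t - \<phi> 0) / t = - A) (at_right 0)"
    using eventually_at_right_real[OF dpos] by (rule eventually_mono) (use quot in auto)
  have "((\<lambda>t. (\<phi> t - \<phi> 0) / t) \<longlongrightarrow> - A) (at_right 0)" by (rule tendsto_eventually[OF ev])
  then show ?thesis using all Apos by auto
qed

end
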